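(* Let $1\leq r<\infty$ and $q=2r-1$. If $u\in RH_q$ and $u^{r}\in A_{\infty}$, then for $s=1+\frac1{2\tau_n[u^{r}]_{A_{\infty}}}$, every cube $Q\subset\mathbb{R}^n$ and every measurable subset $E\subset Q$, $$\frac{u^{sr}(E)}{u^{sr}(Q)}\lesssim [u]_{RH_{q}}^{\frac{q}{4}} \left(\frac{u(E)}{u(Q)}\right)^{\frac1{4}}.$$
   Context: In $\mathbb{R}^n$ with Lebesgue measure, $w(E)=\int_Ew$ and $u^t(E)=\int_Eu^t$. $[w]_{RH_q}=\sup_Q\big(\frac1{|Q|}\int_Qw^q\big)^{1/q}/\big(\frac{w(Q)}{|Q|}\big)$; $[w]_{A_\infty}=\sup_Q\frac1{w(Q)}\int_QM(\chi_Qw)$. $\tau_n$ is the dimensional constant in the sharp reverse Hölder inequality: for $w\in A_\infty$ and $1\le t\le 1+\frac1{\tau_n[w]_{A_\infty}}$, $\big(\frac1{|Q|}\int_Qw^t\big)^{1/t}\le 2\frac{w(Q)}{|Q|}$. *)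

theory Defs
  imports "HOL-Analysis.Analysis"
begin

definition is_cube :: "'a::euclidean_space set \<Rightarrow> bool" where
  "is_cube Q \<longleftrightarrow> (\<exists>a h. h > 0 \<and> Q = cbox a (a + h *\<^sub>R One))"

definition wmeas :: "('a::euclidean_space \<Rightarrow> real) \<Rightarrow> 'a set \<Rightarrow> real" where
  "wmeas w E = (LINT x:E|lebesgue. w x)"

definition weight :: "('a::euclidean_space \<Rightarrow> real) \<Rightarrow> bool" where
  "weight w \<longleftrightarrow> w \<in> borel_measurable lebesgue \<and> (\<forall>x. 0 \<le> w x)
     \<and> (AE x in lebesgue. 0 < w x)
     \<and> (\<forall>Q. is_cube Q \<longrightarrow> set_integrable lebesgue Q w)"

definition RH_ratio :: "real \<Rightarrow> ('a::euclidean_space \<Rightarrow> real) \<Rightarrow> 'a set \<Rightarrow> real" where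
  "RH_ratio q w Q =
     ((LINT x:Q|lebesgue. w x powr q) / measure lebesgue Q) powr (1/q)
       / (wmeas w Q / measure lebesgue Q)"

definition in_RH :: "real \<Rightarrow> ('a::euclidean_space \<Rightarrow> real) \<Rightarrow> bool" where
  "in_RH q w \<longleftrightarrow> weight w
     \<and> (\<forall>Q. is_cube Q \<longrightarrow> set_integrable lebesgue Q (\<lambda>x. w x powr q))
     \<and> bdd_above {RH_ratio q w Q | Q. is_cube Q}"

definition RH_const :: "real \<Rightarrow> ('a::euclidean_space \<Rightarrow> real) \<Rightarrow> real" where
  "RH_const q w = (SUP Q\<in>{Q. is_cube Q}. RH_ratio q w Q)"

definition maximal :: "('a::euclidean_space \<Rightarrow> real) \<Rightarrow> 'a \<Rightarrow> ennreal" where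
  "maximal f x = (SUP Q\<in>{Q. is_cube Q \<and> x \<in> Q}.
       ennreal ((LINT y:Q|lebesgue. \<bar>f y\<bar>) / measure lebesgue Q))"

definition Ainf_const_enn :: "('a::euclidean_space \<Rightarrow> real) \<Rightarrow> ennreal" where
  "Ainf_const_enn w = (SUP Q\<in>{Q. is_cube Q}.
      (\<integral>\<^sup>+x\<in>Q. maximal (\<lambda>y. indicator Q y * w y) x \<partial>lebesgue) / ennreal (wmeas w Q))"

definition in_Ainf :: "('a::euclidean_space \<Rightarrow> real) \<Rightarrow> bool" where
  "in_Ainf w \<longleftrightarrow> weight w \<and> Ainf_const_enn w < \<infinity>"

definition Ainf_const :: "('a::euclidean_space \<Rightarrow> real) \<Rightarrow> real" where
  "Ainf_const w = enn2real (Ainf_const_enn w)"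

text \<open>tau is a constant for which the sharp reverse Hoelder inequality holds in dimension DIM('a).\<close>
definition sharp_RHI_const :: "'a::euclidean_space itself \<Rightarrow> real \<Rightarrow> bool" where
  "sharp_RHI_const _ \<tau> \<longleftrightarrow> \<tau> > 0 \<and>
     (\<forall>(w::'a \<Rightarrow> real) t Q. in_Ainf w \<longrightarrow> 1 \<le> t \<longrightarrow> t \<le> 1 + 1 / (\<tau> * Ainf_const w)
        \<longrightarrow> is_cube Q \<longrightarrow>
        set_integrable lebesgue Q (\<lambda>x. w x powr t) \<and>
        ((LINT x:Q|lebesgue. w x powr t) / measure lebesgue Q) powr (1/t)
          \<le> 2 * (wmeas w Q / measure lebesgue Q))"

end

theory Submission
  imports Defs
begin

lemma cube_facts:
  assumes "is_cube (Q::'a::euclidean_space set)"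
  shows "Q \<in> sets lebesgue" "emeasure lebesgue Q < \<infinity>" "measure lebesgue Q > 0"
proof -
  obtain a h where h: "h > 0" "Q = cbox a (a + h *\<^sub>R One)" using assms is_cube_def by blast
  show "Q \<in> sets lebesgue" using h by simp
  have "Q \<in> lmeasurable" using h by simp
  show "emeasure lebesgue Q < \<infinity>" using fmeasurableD2[OF \<open>Q \<in> lmeasurable\<close>] by (simp add: top.not_eq_extremum)
  have "measure lborel (cbox a (a + h *\<^sub>R (One::'a))) > 0" using h
    by (simp add: inner_simps prod_pos)
  then show "measure lebesgue Q > 0" using h by simp
qed

lemma wmeas_pos:
  assumes "weight u" "is_cube (Q::'a::euclidean_space set)"
  shows "wmeas u Q > 0"
proof -
  have Qm: "Q \<in> sets lebesgue" and mpos: "measure lebesgue Q > 0" and fin: "emeasure lebesgue Q < \<infinity>"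
    using cube_facts[OF assms(2)] by auto
  have int: "integrable lebesgue (\<lambda>x. indicator Q x *\<^sub>R u x)"
    using assms unfolding weight_def set_integrable_def by auto
  have nn: "\<And>x. 0 \<le> u x" using assms(1) unfolding weight_def by auto
  have ge: "wmeas u Q \<ge> 0" unfolding wmeas_def set_lebesgue_integral_def
    by (rule integral_nonneg_AE) (auto simp: nn)
  show ?thesis
  proof (rule ccontr)
    assume "\<not> ?thesis"
    then have z: "integral\<^sup>L lebesgue (\<lambda>x. indicator Q x *\<^sub>R u x) = 0"
      using ge unfolding wmeas_def set_lebesgue_integral_def by auto
    have "AE x in lebesgue. indicator Q x *\<^sub>R u x = 0"
      using z int integral_nonneg_eq_0_iff_AE[of lebesgue "\<lambda>x. indicator Q x *\<^sub>R u x"] nn by auto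
    moreover have "AE x in lebesgue. 0 < u x" using assms(1) unfolding weight_def by auto
    ultimately have "AE x in lebesgue. x \<notin> Q" by eventually_elim (auto simp: indicator_def)
    then have "Q \<in> null_sets lebesgue" using AE_iff_null_sets[OF Qm] by auto
    then have "measure lebesgue Q = 0" by (simp add: measure_def null_setsD1)
    then show False using mpos by simp
  qed
qed

lemma real_CS_aux:
  fixes a X Y :: real
  assumes "X \<ge> 0" "Y \<ge> 0" "\<And>l. l > 0 \<Longrightarrow> a \<le> (l * X + Y / l) / 2"
  shows "a \<le> sqrt (X * Y)"
proof (cases "X > 0 \<and> Y > 0")
  case True
  define l where "l = sqrt Y / sqrt X"
  have lp: "l > 0" using True by (simp add: l_def)
  have "l * X = sqrt (X*Y)"
  proof -
    have "sqrt X * sqrt X = X" using True by simp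
    then show ?thesis using True unfolding l_def by (simp add: real_sqrt_mult field_simps)
  qed
  moreover have "Y / l = sqrt (X*Y)"
  proof -
    have "sqrt Y * sqrt Y = Y" using True by simp
    then show ?thesis using True unfolding l_def by (simp add: real_sqrt_mult field_simps)
  qed
  ultimately show ?thesis using assms(3)[OF lp] by simp
next
  case False
  then have XY: "X * Y = 0" using assms by auto
  show ?thesis
  proof (rule ccontr)
    assume "\<not> ?thesis"
    then have ap: "a > 0" using XY by simp
    show False
    proof (cases "X = 0")
      case True
      define l where "l = Y / a + 1"
      have lp: "l > 0" using ap assms by (simp add: l_def add_nonneg_pos)
      have "2 * a \<le> Y / l" using assms(3)[OF lp] True by simp
      moreover have "Y / l < a" using ap assms unfolding l_def
        by (simp add: field_simps)
      ultimately show False using ap by linarith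
    next
      case False
      then have Y0: "Y = 0" using XY by simp
      define l where "l = a / (X + 1)"
      have lp: "l > 0" using ap assms by (simp add: l_def add_nonneg_pos)
      have "a \<le> l * X / 2" using assms(3)[OF lp] Y0 by simp
      moreover have "l * X < a" using ap assms unfolding l_def
        by (simp add: field_simps)
      ultimately show False using ap by linarith
    qed
  qed
qed

lemma set_CS:
  fixes F G H :: "'a \<Rightarrow> real"
  assumes "set_integrable M E F" "set_integrable M E G" "set_integrable M E H"
    "\<And>x. x \<in> E \<Longrightarrow> 0 \<le> F x" "\<And>x. x \<in> E \<Longrightarrow> 0 \<le> G x"
    "\<And>x. x \<in> E \<Longrightarrow> H x ^ 2 \<le> F x * G x"
  shows "(LINT x:E|M. H x) \<le> sqrt ((LINT x:E|M. F x) * (LINT x:E|M. G x))"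
proof (rule real_CS_aux)
  show "0 \<le> (LINT x:E|M. F x)" "0 \<le> (LINT x:E|M. G x)"
    using assms unfolding set_lebesgue_integral_def
    by (auto intro!: integral_nonneg_AE simp: indicator_def)
  fix l :: real assume lp: "l > 0"
  have pw: "H x \<le> (l * F x + G x / l) / 2" if "x \<in> E" for x
  proof -
    have f: "0 \<le> F x" "0 \<le> G x" "H x ^ 2 \<le> F x * G x" using assms that by auto
    have "0 \<le> (l * F x - G x / l)^2" by simp
    then have "4 * (F x * G x) \<le> (l * F x + G x / l)^2" using lp
      by (simp add: power2_eq_square field_simps)
    then have "(2 * H x)^2 \<le> (l * F x + G x / l)^2" using f(3) by (simp add: power2_eq_square)
    moreover have "0 \<le> l * F x + G x / l" using f lp by simp
    ultimately have "2 * H x \<le> l * F x + G x / l"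
      by (rule power2_le_imp_le)
    then show ?thesis by simp
  qed
  have "(LINT x:E|M. H x) \<le> (LINT x:E|M. (l * F x + G x / l) / 2)"
    using assms(1,2,3) pw by (intro set_integral_mono) auto
  also have "\<dots> = (l * (LINT x:E|M. F x) + (LINT x:E|M. G x) / l) / 2"
    using assms(1,2) by (simp add: set_integral_add set_integral_divide_zero)
  finally show "(LINT x:E|M. H x) \<le> (l * (LINT x:E|M. F x) + (LINT x:E|M. G x) / l) / 2" .
qed

lemma powr_m1_mult: "(c::real) > 0 \<Longrightarrow> c powr (p - 1) * c = c powr p"
  by (simp add: powr_diff)

lemma tangent_powr:
  fixes y c p :: real
  assumes "y \<ge> 0" "c > 0" "p \<ge> 1"
  shows "p * c powr (p - 1) * y - (p - 1) * c powr p \<le> y powr p"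
proof (cases "y = 0")
  case True
  then show ?thesis using assms by simp
next
  case False
  then have yp: "y > 0" using assms by simp
  have d: "((\<lambda>z. z powr p) has_field_derivative p * c powr (p - 1)) (at c within {0<..})"
    using has_real_derivative_powr[OF assms(2)] by (rule has_field_derivative_at_within)
  have "y powr p - c powr p \<ge> p * c powr (p - 1) * (y - c)"
    using convex_on_imp_above_tangent[OF powr_convex[OF assms(3)], of c y, OF _ _ _ d] yp assms(2)
    by (simp add: interior_open)
  moreover have e: "c powr p = c powr (p - 1) * c" using powr_m1_mult[OF assms(2)] by simp
  ultimately show ?thesis unfolding e by (simp add: algebra_simps)
qed

lemma jensen_set:
  fixes f :: "'a::euclidean_space \<Rightarrow> real" and p :: real
  assumes Q: "Q \<in> sets lebesgue" "emeasure lebesgue Q < \<infinity>" "measure lebesgue Q > 0"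
    and nn: "\<And>x. 0 \<le> f x" and i1: "set_integrable lebesgue Q f"
    and i2: "set_integrable lebesgue Q (\<lambda>x. f x powr p)" and p: "p \<ge> 1"
  shows "measure lebesgue Q * ((LINT x:Q|lebesgue. f x) / measure lebesgue Q) powr p
           \<le> (LINT x:Q|lebesgue. f x powr p)"
proof -
  define m where "m = measure lebesgue Q"
  define I where "I = (LINT x:Q|lebesgue. f x)"
  have I0: "I \<ge> 0" unfolding I_def set_lebesgue_integral_def
    by (rule integral_nonneg_AE) (auto simp: nn)
  have J0: "(LINT x:Q|lebesgue. f x powr p) \<ge> 0" unfolding set_lebesgue_integral_def
    by (rule integral_nonneg_AE) auto
  show ?thesis
  proof (cases "I = 0")
    case True
    then show ?thesis using J0 p unfolding I_def[symmetric] by simp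
  next
    case False
    define c where "c = I / m"
    have mp: "m > 0" using Q unfolding m_def by simp
    have cp: "c > 0" using False I0 mp unfolding c_def by simp
    have ic: "set_integrable lebesgue Q (\<lambda>x. (p - 1) * c powr p)"
      unfolding set_integrable_def using Q
      by (intro integrable_indicator) (auto simp: less_top[symmetric])
    have "(LINT x:Q|lebesgue. p * c powr (p - 1) * f x - (p - 1) * c powr p)
          \<le> (LINT x:Q|lebesgue. f x powr p)"
      using i1 i2 ic tangent_powr[OF nn cp p]
      by (intro set_integral_mono) auto
    moreover have "(LINT x:Q|lebesgue. p * c powr (p - 1) * f x - (p - 1) * c powr p)
          = p * c powr (p - 1) * I - m * ((p - 1) * c powr p)"
      using i1 ic Q unfolding I_def m_def
      by (simp add: set_integral_diff set_integral_const less_top[symmetric])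
    moreover have "p * c powr (p - 1) * I = m * (p * c powr p)"
      using powr_m1_mult[OF cp, of p] mp unfolding c_def by (simp add: field_simps)
    moreover have "m * ((p - 1) * c powr p) = m * (p * c powr p) - m * c powr p"
      by (simp add: algebra_simps)
    ultimately have "m * c powr p \<le> (LINT x:Q|lebesgue. f x powr p)"
      by linarith
    then show ?thesis unfolding c_def I_def m_def .
  qed
qed

lemma Ainf_ge1:
  fixes w :: "'a::euclidean_space \<Rightarrow> real"
  assumes "in_Ainf w"
  shows "Ainf_const w \<ge> 1"
proof -
  have wt: "weight w" and fin: "Ainf_const_enn w < \<infinity>" using assms unfolding in_Ainf_def by auto
  define Q0 :: "'a set" where "Q0 = cbox 0 (0 + 1 *\<^sub>R One)"
  have cube: "is_cube Q0" unfolding Q0_def is_cube_def by (intro exI[of _ 0] exI[of _ 1]) auto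
  have Qm: "Q0 \<in> sets lebesgue" and mp: "measure lebesgue Q0 > 0" and Qf: "emeasure lebesgue Q0 < \<infinity>"
    using cube_facts[OF cube] by auto
  define W where "W = wmeas w Q0"
  define m where "m = measure lebesgue Q0"
  have Wp: "W > 0" unfolding W_def by (rule wmeas_pos[OF wt cube])
  have nn: "\<And>x. 0 \<le> w x" using wt unfolding weight_def by auto
  have eqI: "(LINT y:Q0|lebesgue. \<bar>indicator Q0 y * w y\<bar>) = W"
    unfolding W_def wmeas_def
    by (rule set_lebesgue_integral_cong) (auto simp: Qm nn)
  have pt: "ennreal (W / m) * indicator Q0 x \<le> maximal (\<lambda>y. indicator Q0 y * w y) x * indicator Q0 x" for x
  proof (cases "x \<in> Q0")
    case True
    have "ennreal (W / m) \<le> maximal (\<lambda>y. indicator Q0 y * w y) x"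
      unfolding maximal_def using True cube eqI unfolding m_def
      by (intro SUP_upper2[of Q0]) auto
    then show ?thesis using True by simp
  qed simp
  have "ennreal W = ennreal (W / m) * emeasure lebesgue Q0"
    using mp Qf Wp unfolding m_def
    by (simp add: emeasure_eq_ennreal_measure[of lebesgue Q0] less_top ennreal_mult'[symmetric])
  also have "\<dots> = (\<integral>\<^sup>+x. ennreal (W / m) * indicator Q0 x \<partial>lebesgue)"
    using nn_integral_cmult_indicator[OF Qm, of "ennreal (W / m)"] by (rule sym)
  also have "\<dots> \<le> (\<integral>\<^sup>+x\<in>Q0. maximal (\<lambda>y. indicator Q0 y * w y) x \<partial>lebesgue)"
    by (rule nn_integral_mono) (rule pt)
  finally have le: "ennreal W \<le> (\<integral>\<^sup>+x\<in>Q0. maximal (\<lambda>y. indicator Q0 y * w y) x \<partial>lebesgue)" .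
  have "1 = ennreal W / ennreal (wmeas w Q0)"
    using Wp unfolding W_def by (simp add: divide_ennreal)
  also have "\<dots> \<le> (\<integral>\<^sup>+x\<in>Q0. maximal (\<lambda>y. indicator Q0 y * w y) x \<partial>lebesgue) / ennreal (wmeas w Q0)"
    by (rule divide_right_mono_ennreal[OF le])
  also have "\<dots> \<le> Ainf_const_enn w"
    unfolding Ainf_const_enn_def using cube by (intro SUP_upper) auto
  finally have "1 \<le> Ainf_const_enn w" .
  then show ?thesis unfolding Ainf_const_def using fin
    using enn2real_mono[of 1 "Ainf_const_enn w"] by (simp add: infinity_ennreal_def)
qed

lemma powr_bound_from_root:
  fixes X Y e :: real
  assumes "X \<ge> 0" "e > 0" "X powr (1/e) \<le> Y"
  shows "X \<le> Y powr e"
proof -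
  have "X = (X powr (1/e)) powr e" using assms by (simp add: powr_powr powr_one)
  also have "\<dots> \<le> Y powr e" using assms by (intro powr_mono2) auto
  finally show ?thesis .
qed

lemma key_alg:
  fixes m U V K D B Cc CQ F FQ AEs AQ r s t q :: real
  assumes mp: "m > 0" and Up: "U > 0" and Vp: "V > 0" and K0: "K \<ge> 0" and D0: "D \<ge> 0"
    and B0: "B \<ge> 0" and C0: "Cc \<ge> 0" and F0: "F \<ge> 0" and AQp: "AQ > 0"
    and r: "r \<ge> 1" and q: "q = 2*r - 1" and t: "t = 2 * s - 1" and s: "s \<ge> 1"
    and h1: "AEs \<le> sqrt (B * Cc)" and h2: "B \<le> sqrt (D * F)"
    and h3: "(CQ/m) powr (1/t) \<le> 2 * (V/m)" and h3': "Cc \<le> CQ"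
    and h4: "(FQ/m) powr (1/q) / (U/m) \<le> K" and h4': "F \<le> FQ"
    and h5: "m * (V/m) powr s \<le> AQ" and h6: "m * (U/m) powr r \<le> V"
  shows "AEs / AQ \<le> 2 powr (t/2) * K powr (q/4) * (D/U) powr (1/4)"
proof -
  define a where "a = U / m"
  define b where "b = V / m"
  have ap: "a > 0" and bp: "b > 0" using mp Up Vp by (auto simp: a_def b_def)
  have tp: "t \<ge> 1" and qp: "q \<ge> 1" using s r t q by auto
  have Cb: "Cc \<le> m * (2 * b) powr t"
  proof -
    have "CQ / m \<le> (2 * b) powr t"
      using powr_bound_from_root[of "CQ/m" t "2*b"] h3 h3' C0 mp tp unfolding b_def by auto
    then show ?thesis using h3' mp by (simp add: field_simps)
  qed
  have Fb: "F \<le> m * (K * a) powr q"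
  proof -
    have "(FQ/m) powr (1/q) / a \<le> K" using h4 unfolding a_def .
    then have "(FQ/m) powr (1/q) \<le> K * a" using pos_divide_le_eq[OF ap] by simp
    then have "FQ / m \<le> (K * a) powr q"
      using powr_bound_from_root[of "FQ/m" q "K*a"] h4' F0 mp qp by auto
    then show ?thesis using h4' mp by (simp add: field_simps)
  qed
  have ba: "a powr r \<le> b" using h6 mp unfolding a_def b_def by (simp add: field_simps)
  have AQb: "m * b powr s \<le> AQ" using h5 unfolding b_def .
  define T where "T = 2 powr (t/2) * K powr (q/4) * (D/U) powr (1/4)"
  have T0: "T \<ge> 0" unfolding T_def by simp
  show ?thesis
  proof (cases "D > 0 \<and> K > 0")
    case False
    then have "D * F = 0 \<or> F \<le> 0" using D0 K0 Fb by auto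
    then have "B \<le> 0" using h2 Fb F0 by auto
    then have "AEs \<le> 0" using h1 B0 by simp
    then have "AEs / AQ \<le> 0" using AQp by (simp add: divide_nonpos_pos)
    then show ?thesis using T0 unfolding T_def by linarith
  next
    case True
    then have Dp: "D > 0" and Kp: "K > 0" by auto
    define R where "R = sqrt (sqrt (D * (m * (K * a) powr q)) * (m * (2 * b) powr t))"
    have AER: "AEs \<le> R"
    proof -
      have "B \<le> sqrt (D * (m * (K * a) powr q))"
        using h2 Fb D0 by (meson mult_left_mono order_trans real_sqrt_le_mono)
      then have "B * Cc \<le> sqrt (D * (m * (K * a) powr q)) * (m * (2 * b) powr t)"
        using Cb B0 C0 by (meson mult_mono real_sqrt_ge_zero order_trans)
      then show ?thesis using h1 unfolding R_def by (meson order_trans real_sqrt_le_mono)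
    qed
    have Rp: "R > 0" unfolding R_def using Dp Kp ap bp mp by simp
    define X where "X = D * (m * (K * a) powr q)"
    define Y where "Y = m * (2 * b) powr t"
    have Xp: "X > 0" and Yp: "Y > 0" unfolding X_def Y_def using Dp Kp ap bp mp by auto
    have lnR: "ln R = ln X / 4 + ln Y / 2"
    proof -
      have "ln R = ln (sqrt X * Y) / 2" unfolding R_def X_def[symmetric] Y_def[symmetric]
        using Xp Yp by (simp add: ln_sqrt)
      also have "\<dots> = (ln X / 2 + ln Y) / 2" using Xp Yp by (simp add: ln_mult ln_sqrt)
      finally show ?thesis by simp
    qed
    have lnX: "ln X = ln D + ln m + q * ln K + q * ln a"
      unfolding X_def using Dp Kp ap mp by (simp add: ln_mult algebra_simps)
    have lnY: "ln Y = ln m + t * ln 2 + t * ln b"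
      unfolding Y_def using bp mp by (simp add: ln_mult algebra_simps)
    have lnT0: "ln (T * (m * b powr s)) = t/2 * ln 2 + q/4 * ln K + 1/4 * ln (D/U) + ln m + s * ln b"
      unfolding T_def using Dp Kp ap bp mp Up
      by (simp add: ln_mult)
    have lnDU: "ln (D/U) = ln D - ln U" using Dp Up by (simp add: ln_div)
    have e3: "t/2 * ln 2 = t * ln 2 / 2" "q/4 * ln K = q * ln K / 4" by simp_all
    have lnT: "ln (T * (m * b powr s)) = t * ln 2 / 2 + q * ln K / 4 + ln D / 4 - ln U / 4 + ln m + s * ln b"
      using lnT0 lnDU e3 by linarith
    have lnU: "ln U = ln a + ln m" unfolding a_def using Up mp by (simp add: ln_div)
    have "ln (a powr r) \<le> ln b" using ba ap bp by (subst ln_le_cancel_iff) auto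
    then have lnba: "r * ln a \<le> ln b" by simp
    have e1: "q * ln a = 2 * (r * ln a) - ln a" unfolding q by (simp add: algebra_simps)
    have e2: "t * ln b = 2 * (s * ln b) - ln b" unfolding t by (simp add: algebra_simps)
    have "ln R \<le> ln (T * (m * b powr s))"
      unfolding lnR lnT lnX lnY using lnU lnba e1 e2 by (simp add: algebra_simps divide_simps)
    then have "R \<le> T * (m * b powr s)"
      using Rp Dp Kp ap bp mp Up unfolding T_def by (subst (asm) ln_le_cancel_iff) auto
    also have "\<dots> \<le> T * AQ" using AQb T0 by (rule mult_left_mono)
    finally have "AEs \<le> T * AQ" using AER by linarith
    then show ?thesis using AQp unfolding T_def by (simp add: pos_divide_le_eq)
  qed
qed

lemma set_integral_nonneg_real:
  fixes f :: "'a \<Rightarrow> real"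
  assumes "\<And>x. 0 \<le> f x"
  shows "0 \<le> (LINT x:E|M. f x)"
  unfolding set_lebesgue_integral_def
  by (intro integral_nonneg_AE AE_I2) (simp add: assms)

lemma set_integral_mono_subset_real:
  fixes f :: "'a \<Rightarrow> real"
  assumes "set_integrable M Q f" "E \<in> sets M" "E \<subseteq> Q" "\<And>x. 0 \<le> f x"
  shows "(LINT x:E|M. f x) \<le> (LINT x:Q|M. f x)"
proof -
  have iE: "set_integrable M E f" using set_integrable_subset[OF assms(1,2,3)] .
  show ?thesis
    unfolding set_lebesgue_integral_def
    using iE assms(1,3,4) unfolding set_integrable_def
    by (intro integral_mono) (auto simp: indicator_def)
qed

lemma powr_sq: "((x::real) powr a) ^ 2 = x powr (2 * a)"
proof -
  have "(x powr a) ^ 2 = x powr a * x powr a" by (rule power2_eq_square)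
  also have "\<dots> = x powr (a + a)" by (rule powr_add[symmetric])
  finally show ?thesis by simp
qed

theorem lemma3p1:
  fixes r \<tau> :: real
  assumes "1 \<le> r"
    and "sharp_RHI_const TYPE('a::euclidean_space) \<tau>"
  shows "\<exists>C>0. \<forall>u::'a \<Rightarrow> real. in_RH (2*r - 1) u \<and> in_Ainf (\<lambda>x. u x powr r) \<longrightarrow>
          (let s = 1 + 1 / (2 * \<tau> * Ainf_const (\<lambda>x. u x powr r)) in
           \<forall>Q E. is_cube Q \<and> E \<in> sets lebesgue \<and> E \<subseteq> Q \<longrightarrow>
             wmeas (\<lambda>x. u x powr (s*r)) E / wmeas (\<lambda>x. u x powr (s*r)) Q
               \<le> C * RH_const (2*r - 1) u powr ((2*r - 1)/4) * (wmeas u E / wmeas u Q) powr (1/4))"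
proof -
  have taup: "\<tau> > 0" and SR: "\<And>(w::'a \<Rightarrow> real) t Q. in_Ainf w \<Longrightarrow> 1 \<le> t \<Longrightarrow> t \<le> 1 + 1 / (\<tau> * Ainf_const w)
        \<Longrightarrow> is_cube Q \<Longrightarrow>
        set_integrable lebesgue Q (\<lambda>x. w x powr t) \<and>
        ((LINT x:Q|lebesgue. w x powr t) / measure lebesgue Q) powr (1/t)
          \<le> 2 * (wmeas w Q / measure lebesgue Q)"
    using assms(2) unfolding sharp_RHI_const_def by auto
  define C where "C = 2 powr ((1 + 1/\<tau>)/2)"
  have Cp: "C > 0" unfolding C_def by simp
  show ?thesis
  proof (intro exI[of _ C] conjI allI impI)
    show "C > 0" by (rule Cp)
    fix u :: "'a \<Rightarrow> real"
    assume H: "in_RH (2*r - 1) u \<and> in_Ainf (\<lambda>x. u x powr r)"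
    define v where "v = (\<lambda>x. u x powr r)"
    define A where "A = Ainf_const v"
    define q where "q = 2 * r - 1"
    have RH: "in_RH q u" and AI: "in_Ainf v" using H unfolding v_def q_def by auto
    have A1: "A \<ge> 1" unfolding A_def by (rule Ainf_ge1[OF AI])
    define s where "s = 1 + 1 / (2 * \<tau> * A)"
    define t where "t = 2 * s - 1"
    have t_eq: "t = 1 + 1 / (\<tau> * A)" unfolding t_def s_def by simp
    have tA: "0 < \<tau> * A" using taup A1 by simp
    have "0 \<le> 1 / (2 * \<tau> * A)" using taup A1 by simp
    then have s1: "s \<ge> 1" unfolding s_def by simp
    have t1: "t \<ge> 1" using s1 unfolding t_def by simp
    have st: "s \<le> t" using s1 unfolding t_def by simp
    have tle: "t \<le> 1 + 1/\<tau>"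
    proof -
      have "\<tau> \<le> \<tau> * A" using taup A1 by simp
      then have "1 / (\<tau> * A) \<le> 1 / \<tau>" using taup by (intro divide_left_mono) auto
      then show ?thesis unfolding t_eq by simp
    qed
    have q1: "q \<ge> 1" using assms(1) unfolding q_def by simp
    have wu: "weight u" using RH unfolding in_RH_def by auto
    have wv: "weight v" using AI unfolding in_Ainf_def by auto
    have unn: "\<And>x. 0 \<le> u x" using wu unfolding weight_def by auto
    have vnn: "\<And>x. 0 \<le> v x" unfolding v_def by simp
    have fs: "(\<lambda>x. v x powr s) = (\<lambda>x. u x powr (s*r))"
      by (simp add: v_def powr_powr mult.commute)
    have main: "\<forall>Q E. is_cube Q \<and> E \<in> sets lebesgue \<and> E \<subseteq> Q \<longrightarrow>
             wmeas (\<lambda>x. u x powr (s*r)) E / wmeas (\<lambda>x. u x powr (s*r)) Q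
               \<le> C * RH_const q u powr (q/4) * (wmeas u E / wmeas u Q) powr (1/4)"
    proof (intro allI impI)
      fix Q E :: "'a set"
      assume QE: "is_cube Q \<and> E \<in> sets lebesgue \<and> E \<subseteq> Q"
      then have cube: "is_cube Q" and Em: "E \<in> sets lebesgue" and EQ: "E \<subseteq> Q" by auto
      have Qm: "Q \<in> sets lebesgue" and Qf: "emeasure lebesgue Q < \<infinity>" and mp: "measure lebesgue Q > 0"
        using cube_facts[OF cube] by auto
      define m where "m = measure lebesgue Q"
      have iu: "set_integrable lebesgue Q u" using wu cube unfolding weight_def by auto
      have iq: "set_integrable lebesgue Q (\<lambda>x. u x powr q)" using RH cube unfolding in_RH_def by auto
      have iv: "set_integrable lebesgue Q v" using wv cube unfolding weight_def by auto
      have SRt: "set_integrable lebesgue Q (\<lambda>x. v x powr t) \<and>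
        ((LINT x:Q|lebesgue. v x powr t) / m) powr (1/t) \<le> 2 * (wmeas v Q / m)"
        unfolding m_def using SR[OF AI t1 _ cube] t_eq A_def by simp
      have SRs: "set_integrable lebesgue Q (\<lambda>x. v x powr s)"
        using SR[OF AI s1 _ cube] st t_eq A_def by simp
      have it: "set_integrable lebesgue Q (\<lambda>x. v x powr t)" using SRt by simp
      have is': "set_integrable lebesgue Q (\<lambda>x. u x powr (s*r))" using SRs fs by simp
      have iuE: "set_integrable lebesgue E u" using set_integrable_subset[OF iu Em EQ] .
      have iqE: "set_integrable lebesgue E (\<lambda>x. u x powr q)" using set_integrable_subset[OF iq Em EQ] .
      have ivE: "set_integrable lebesgue E v" using set_integrable_subset[OF iv Em EQ] .
      have itE: "set_integrable lebesgue E (\<lambda>x. v x powr t)" using set_integrable_subset[OF it Em EQ] .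
      have isE: "set_integrable lebesgue E (\<lambda>x. u x powr (s*r))" using set_integrable_subset[OF is' Em EQ] .
      define AEs where "AEs = wmeas (\<lambda>x. u x powr (s*r)) E"
      define AQ where "AQ = wmeas (\<lambda>x. u x powr (s*r)) Q"
      define B where "B = (LINT x:E|lebesgue. v x)"
      define Cc where "Cc = (LINT x:E|lebesgue. v x powr t)"
      define CQ where "CQ = (LINT x:Q|lebesgue. v x powr t)"
      define D where "D = wmeas u E"
      define F where "F = (LINT x:E|lebesgue. u x powr q)"
      define FQ where "FQ = (LINT x:Q|lebesgue. u x powr q)"
      define U where "U = wmeas u Q"
      define V where "V = wmeas v Q"
      define K where "K = RH_const q u"
      have Up: "U > 0" unfolding U_def by (rule wmeas_pos[OF wu cube])
      have Vp: "V > 0" unfolding V_def by (rule wmeas_pos[OF wv cube])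
      have D0: "D \<ge> 0" unfolding D_def wmeas_def by (rule set_integral_nonneg_real) (rule unn)
      have B0: "B \<ge> 0" unfolding B_def by (rule set_integral_nonneg_real) (rule vnn)
      have C0: "Cc \<ge> 0" unfolding Cc_def by (rule set_integral_nonneg_real) simp
      have F0: "F \<ge> 0" unfolding F_def by (rule set_integral_nonneg_real) simp
      have h1: "AEs \<le> sqrt (B * Cc)" unfolding AEs_def B_def Cc_def wmeas_def
      proof (rule set_CS[OF ivE itE isE])
        fix x assume "x \<in> E"
        show "0 \<le> v x" by (rule vnn)
        show "0 \<le> v x powr t" by simp
        have "(u x powr (s*r))^2 = u x powr (r + r * t)"
          unfolding powr_sq t_def by (simp add: algebra_simps)
        also have "\<dots> = v x * v x powr t" unfolding v_def by (simp add: powr_powr powr_add)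
        finally show "(u x powr (s*r))^2 \<le> v x * v x powr t" by simp
      qed
      have h2: "B \<le> sqrt (D * F)" unfolding B_def D_def F_def wmeas_def
      proof (rule set_CS[OF iuE iqE ivE])
        fix x assume "x \<in> E"
        show "0 \<le> u x" by (rule unn)
        show "0 \<le> u x powr q" by simp
        have "(v x)^2 = u x powr (1 + q)"
          unfolding v_def powr_sq q_def by (simp add: algebra_simps)
        also have "\<dots> = u x * u x powr q" using unn[of x] by (simp add: powr_add)
        finally show "(v x)^2 \<le> u x * u x powr q" by simp
      qed
      have h3: "(CQ/m) powr (1/t) \<le> 2 * (V/m)" using SRt unfolding CQ_def V_def by simp
      have h3': "Cc \<le> CQ" unfolding Cc_def CQ_def
        by (rule set_integral_mono_subset_real[OF it Em EQ]) simp
      have bdd: "bdd_above ((\<lambda>Q. RH_ratio q u Q) ` {Q. is_cube Q})"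
        using RH unfolding in_RH_def by (simp add: setcompr_eq_image)
      have h4: "(FQ/m) powr (1/q) / (U/m) \<le> K"
      proof -
        have "RH_ratio q u Q \<le> K" unfolding K_def RH_const_def
          using bdd cube by (intro cSUP_upper) auto
        then show ?thesis unfolding RH_ratio_def FQ_def U_def m_def .
      qed
      have K0: "K \<ge> 0"
      proof -
        have "0 \<le> (FQ/m) powr (1/q) / (U/m)" using Up mp unfolding m_def by simp
        then show ?thesis using h4 by linarith
      qed
      have h4': "F \<le> FQ" unfolding F_def FQ_def
        by (rule set_integral_mono_subset_real[OF iq Em EQ]) simp
      have h5: "m * (V/m) powr s \<le> AQ"
      proof -
        have "m * (V/m) powr s \<le> (LINT x:Q|lebesgue. v x powr s)"
          unfolding m_def V_def wmeas_def by (rule jensen_set[OF Qm Qf mp vnn iv SRs s1])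
        also have "\<dots> = AQ" unfolding AQ_def wmeas_def fs ..
        finally show ?thesis .
      qed
      have h6: "m * (U/m) powr r \<le> V"
      proof -
        have "m * (U/m) powr r \<le> (LINT x:Q|lebesgue. u x powr r)"
          unfolding m_def U_def wmeas_def by (rule jensen_set[OF Qm Qf mp unn iu _ assms(1)])
            (use iv in \<open>simp add: v_def\<close>)
        then show ?thesis unfolding V_def wmeas_def v_def .
      qed
      have AQp: "AQ > 0"
      proof -
        have "0 < m * (V/m) powr s" using mp Vp unfolding m_def by simp
        then show ?thesis using h5 by linarith
      qed
      have mp': "m > 0" using mp unfolding m_def .
      have key: "AEs / AQ \<le> 2 powr (t/2) * K powr (q/4) * (D/U) powr (1/4)"
        by (rule key_alg[OF mp' Up Vp K0 D0 B0 C0 F0 AQp assms(1) q_def t_def s1 h1 h2 h3 h3' h4 h4' h5 h6])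
      have "2 powr (t/2) \<le> C" unfolding C_def using tle by (intro powr_mono) auto
      then have "2 powr (t/2) * (K powr (q/4) * (D/U) powr (1/4)) \<le> C * (K powr (q/4) * (D/U) powr (1/4))"
        by (intro mult_right_mono) auto
      with key show "wmeas (\<lambda>x. u x powr (s*r)) E / wmeas (\<lambda>x. u x powr (s*r)) Q
               \<le> C * RH_const q u powr (q/4) * (wmeas u E / wmeas u Q) powr (1/4)"
        unfolding AEs_def[symmetric] AQ_def[symmetric] K_def[symmetric] D_def[symmetric] U_def[symmetric]
        by (simp add: mult.assoc)
    qed
    show "let s = 1 + 1 / (2 * \<tau> * Ainf_const (\<lambda>x. u x powr r)) in
           \<forall>Q E. is_cube Q \<and> E \<in> sets lebesgue \<and> E \<subseteq> Q \<longrightarrow>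
             wmeas (\<lambda>x. u x powr (s*r)) E / wmeas (\<lambda>x. u x powr (s*r)) Q
               \<le> C * RH_const (2*r - 1) u powr ((2*r - 1)/4) * (wmeas u E / wmeas u Q) powr (1/4)"
      unfolding Let_def using main unfolding s_def A_def v_def q_def .
  qed
qed

end
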